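(* Let $X$ satisfy (P1) and (P2), and let $\alpha=\alpha_1\cup\dots\cup\alpha_k$ be the polygonal decomposition of a saddle connection $\alpha$ on $X$. Then (1) every non-adjacent segment $\alpha_i$ has length at least $l_0$; (2) for any two consecutive segments $\alpha_i,\alpha_{i+1}$ which are both adjacent, $l(\alpha_i)+l(\alpha_{i+1})>l_0$. Consequently $l(\alpha)\ge (p_\alpha+q_\alpha)\,l_0$.
   Context: $X$ is a translation surface obtained from finitely many Euclidean polygons by gluing pairs of parallel sides of equal length by translations, with (P1): each polygon convex with all interior angles obtuse or right; (P2): no two sides of the same polygon are identified. $l_0$ is the smallest side length among all polygons. A saddle connection is a straight segment on $X$ between singularities (images of polygon vertices) with no singularity in its interior. Polygonal decomposition: cut $\alpha$ each time it passes from one polygon to another, giving consecutive segments $\alpha_1,\dots,\alpha_k$, each contained in a single polygon with endpoints on its boundary. A segment contained in polygon $P$ is adjacent if it goes from the relative interior of a side $e$ of $P$ to the relative interior of a side of $P$ adjacent to $e$; otherwise (its endpoints lie on non-adjacent sides of $P$, or one of its endpoints is a vertex of $P$) it is non-adjacent. $p_\alpha$ is the number of non-adjacent segments; $q_\alpha=\sum\lfloor r/2\rfloor$, the sum over all maximal runs of consecutive adjacent segments, $r$ being the number of segments in the run (i.e. the maximal number of disjoint pairs of consecutive adjacent segments). *)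

theory Defs
  imports "HOL-Analysis.Analysis"
begin

text \<open>
  A finite family of polygons is given by
  N (number of polygons), n i (number of vertices of polygon i) and V i j (the j-th vertex of
  polygon i, j < n i, listed counterclockwise).
  The gluing is a fixed-point-free involution glue on the set of sides; glued sides are parallel,
  of equal length, and identified by a translation (so, with counterclockwise orientation, their
  side vectors are opposite).
\<close>

definition cross :: "complex \<Rightarrow> complex \<Rightarrow> real" where
  "cross u w = Im (cnj u * w)"

definition nxt :: "(nat \<Rightarrow> nat) \<Rightarrow> nat \<Rightarrow> nat \<Rightarrow> nat" where
  "nxt n i j = Suc j mod n i"

definition prv :: "(nat \<Rightarrow> nat) \<Rightarrow> nat \<Rightarrow> nat \<Rightarrow> nat" where
  "prv n i j = (j + n i - 1) mod n i"

definition side_start :: "(nat \<Rightarrow> nat \<Rightarrow> complex) \<Rightarrow> nat \<times> nat \<Rightarrow> complex" where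
  "side_start V s = V (fst s) (snd s)"

definition side_end :: "(nat \<Rightarrow> nat) \<Rightarrow> (nat \<Rightarrow> nat \<Rightarrow> complex) \<Rightarrow> nat \<times> nat \<Rightarrow> complex" where
  "side_end n V s = V (fst s) (nxt n (fst s) (snd s))"

definition side_vec :: "(nat \<Rightarrow> nat) \<Rightarrow> (nat \<Rightarrow> nat \<Rightarrow> complex) \<Rightarrow> nat \<times> nat \<Rightarrow> complex" where
  "side_vec n V s = side_end n V s - side_start V s"

definition sides :: "nat \<Rightarrow> (nat \<Rightarrow> nat) \<Rightarrow> (nat \<times> nat) set" where
  "sides N n = {(i, j). i < N \<and> j < n i}"

definition poly :: "(nat \<Rightarrow> nat) \<Rightarrow> (nat \<Rightarrow> nat \<Rightarrow> complex) \<Rightarrow> nat \<Rightarrow> complex set" where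
  "poly n V i = convex hull (V i ` {..<n i})"

definition vertices :: "(nat \<Rightarrow> nat) \<Rightarrow> (nat \<Rightarrow> nat \<Rightarrow> complex) \<Rightarrow> nat \<Rightarrow> complex set" where
  "vertices n V i = V i ` {..<n i}"

text \<open>Translation vector of the gluing of side s onto side glue s: it maps side_start s to
  side_end (glue s) and side_end s to side_start (glue s).\<close>
definition transl ::
  "(nat \<Rightarrow> nat) \<Rightarrow> (nat \<Rightarrow> nat \<Rightarrow> complex) \<Rightarrow> (nat \<times> nat \<Rightarrow> nat \<times> nat) \<Rightarrow> nat \<times> nat \<Rightarrow> complex" where
  "transl n V glue s = side_start V (glue s) - side_end n V s"

definition translation_surface ::
  "nat \<Rightarrow> (nat \<Rightarrow> nat) \<Rightarrow> (nat \<Rightarrow> nat \<Rightarrow> complex) \<Rightarrow> (nat \<times> nat \<Rightarrow> nat \<times> nat) \<Rightarrow> bool" where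
  "translation_surface N n V glue \<longleftrightarrow>
     0 < N \<and> (\<forall>i<N. 3 \<le> n i \<and> inj_on (V i) {..<n i}) \<and>
     (\<forall>s \<in> sides N n. glue s \<in> sides N n \<and> glue (glue s) = s \<and> glue s \<noteq> s \<and>
        side_vec n V (glue s) = - side_vec n V s)"

text \<open>(P1): each polygon is convex (strictly: every other vertex lies strictly to the left of each
  directed side, counterclockwise orientation) and every interior angle is right or obtuse.\<close>
definition P1 :: "nat \<Rightarrow> (nat \<Rightarrow> nat) \<Rightarrow> (nat \<Rightarrow> nat \<Rightarrow> complex) \<Rightarrow> bool" where
  "P1 N n V \<longleftrightarrow>
     (\<forall>i<N. \<forall>j<n i. \<forall>m<n i. m \<noteq> j \<and> m \<noteq> nxt n i j \<longrightarrow>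
         cross (V i (nxt n i j) - V i j) (V i m - V i j) > 0) \<and>
     (\<forall>i<N. \<forall>j<n i. inner (V i (prv n i j) - V i j) (V i (nxt n i j) - V i j) \<le> 0)"

definition P2 :: "nat \<Rightarrow> (nat \<Rightarrow> nat) \<Rightarrow> (nat \<times> nat \<Rightarrow> nat \<times> nat) \<Rightarrow> bool" where
  "P2 N n glue \<longleftrightarrow> (\<forall>s \<in> sides N n. fst (glue s) \<noteq> fst s)"

definition l0 :: "nat \<Rightarrow> (nat \<Rightarrow> nat) \<Rightarrow> (nat \<Rightarrow> nat \<Rightarrow> complex) \<Rightarrow> real" where
  "l0 N n V = Min ((\<lambda>s. norm (side_vec n V s)) ` sides N n)"

text \<open>A saddle connection given by its polygonal decomposition: segments
  [a i, b i] (i < k) in polygons P i, all in common direction d.  Each segment is a maximal chord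
  of its (convex) polygon in direction d.  The first starts at a vertex, the last ends at a vertex;
  every intermediate exit point b i lies in the relative interior of side (P i, e i) (so is not a
  singularity), and the next segment starts at the image of b i under the gluing translation,
  in the polygon containing the glued partner side.\<close>
definition saddle_decomp ::
  "nat \<Rightarrow> (nat \<Rightarrow> nat) \<Rightarrow> (nat \<Rightarrow> nat \<Rightarrow> complex) \<Rightarrow> (nat \<times> nat \<Rightarrow> nat \<times> nat) \<Rightarrow>
   nat \<Rightarrow> (nat \<Rightarrow> nat) \<Rightarrow> (nat \<Rightarrow> complex) \<Rightarrow> (nat \<Rightarrow> complex) \<Rightarrow> (nat \<Rightarrow> nat) \<Rightarrow> complex \<Rightarrow> bool" where
  "saddle_decomp N n V glue k P a b e d \<longleftrightarrow>
     1 \<le> k \<and> d \<noteq> 0 \<and>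
     (\<forall>i<k. P i < N \<and> a i \<in> poly n V (P i) \<and> b i \<in> poly n V (P i) \<and>
        (\<exists>t>0. b i - a i = t *\<^sub>R d) \<and>
        (\<forall>s>0. a i - s *\<^sub>R d \<notin> poly n V (P i) \<and> b i + s *\<^sub>R d \<notin> poly n V (P i))) \<and>
     a 0 \<in> vertices n V (P 0) \<and> b (k - 1) \<in> vertices n V (P (k - 1)) \<and>
     (\<forall>i. Suc i < k \<longrightarrow>
        e i < n (P i) \<and>
        b i \<in> open_segment (side_start V (P i, e i)) (side_end n V (P i, e i)) \<and>
        fst (glue (P i, e i)) = P (Suc i) \<and>
        a (Suc i) = b i + transl n V glue (P i, e i))"

definition adjacent_seg ::
  "(nat \<Rightarrow> nat) \<Rightarrow> (nat \<Rightarrow> nat \<Rightarrow> complex) \<Rightarrow> (nat \<Rightarrow> nat) \<Rightarrow> (nat \<Rightarrow> complex) \<Rightarrow> (nat \<Rightarrow> complex) \<Rightarrow> nat \<Rightarrow> bool" where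
  "adjacent_seg n V P a b i \<longleftrightarrow>
     (\<exists>f g. f < n (P i) \<and> g < n (P i) \<and>
        a i \<in> open_segment (side_start V (P i, f)) (side_end n V (P i, f)) \<and>
        b i \<in> open_segment (side_start V (P i, g)) (side_end n V (P i, g)) \<and>
        (g = nxt n (P i) f \<or> f = nxt n (P i) g))"

definition p_count :: "nat \<Rightarrow> (nat \<Rightarrow> bool) \<Rightarrow> nat" where
  "p_count k adj = card {i. i < k \<and> \<not> adj i}"

definition max_runs :: "nat \<Rightarrow> (nat \<Rightarrow> bool) \<Rightarrow> (nat \<times> nat) set" where
  "max_runs k adj = {(s, t). s < t \<and> t \<le> k \<and> (\<forall>j. s \<le> j \<and> j < t \<longrightarrow> adj j) \<and>
      (s = 0 \<or> \<not> adj (s - 1)) \<and> (t = k \<or> \<not> adj t)}"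

definition q_count :: "nat \<Rightarrow> (nat \<Rightarrow> bool) \<Rightarrow> nat" where
  "q_count k adj = (\<Sum>(s, t) \<in> max_runs k adj. (t - s) div 2)"

end

theory Submission
  imports Defs
begin

definition nx :: "nat \<Rightarrow> nat \<Rightarrow> nat" where "nx m j = Suc j mod m"
definition pv :: "nat \<Rightarrow> nat \<Rightarrow> nat" where "pv m j = (j + m - 1) mod m"

lemma nx_eq: "j < m \<Longrightarrow> nx m j = (if Suc j = m then 0 else Suc j)"
  by (auto simp: nx_def)

lemma pv_eq: assumes "j < m" shows "pv m j = (if j = 0 then m - 1 else j - 1)"
proof (cases j)
  case 0 then show ?thesis using assms by (simp add: pv_def)
next
  case (Suc i)
  have "j + m - 1 = (j - 1) + m" using Suc assms by simp
  then show ?thesis using Suc assms by (simp add: pv_def)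
qed

lemma nxpv:
  assumes "3 \<le> m" "j < m"
  shows "nx m j < m" "pv m j < m" "nx m (pv m j) = j" "pv m (nx m j) = j"
    "nx m j \<noteq> j" "pv m j \<noteq> j" "nx m (nx m j) \<noteq> j" "nx m j \<noteq> pv m j"
  using assms by (auto simp: nx_eq pv_eq)

lemma nx_inj: "a < m \<Longrightarrow> b < m \<Longrightarrow> nx m a = nx m b \<Longrightarrow> a = b"
  by (auto simp: nx_eq split: if_splits)

lemma cross_eq: "cross u w = Re u * Im w - Im u * Re w" by (simp add: cross_def)

lemma cross_comb:
  assumes "u + v = 1"
  shows "cross a (u *\<^sub>R x + v *\<^sub>R y - c) = u * cross a (x - c) + v * cross a (y - c)"
proof -
  have v: "v = 1 - u" using assms by simp
  show ?thesis unfolding v by (simp add: cross_eq algebra_simps)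
qed

lemma halfplane_convex: "convex {y::complex. 0 \<le> cross a (y - c)}"
  unfolding convex_def by (auto simp: cross_comb)

definition PG :: "nat \<Rightarrow> (nat \<Rightarrow> complex) \<Rightarrow> bool" where
  "PG m W \<longleftrightarrow> 3 \<le> m \<and> inj_on W {..<m} \<and>
    (\<forall>j<m. \<forall>l<m. l \<noteq> j \<and> l \<noteq> nx m j \<longrightarrow> 0 < cross (W (nx m j) - W j) (W l - W j)) \<and>
    (\<forall>j<m. inner (W (pv m j) - W j) (W (nx m j) - W j) \<le> 0)"

lemma HP:
  assumes "PG m W" "j < m" "y \<in> convex hull (W ` {..<m})"
  shows "0 \<le> cross (W (nx m j) - W j) (y - W j)"
proof -
  have "W ` {..<m} \<subseteq> {y. 0 \<le> cross (W (nx m j) - W j) (y - W j)}"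
  proof
    fix z assume "z \<in> W ` {..<m}"
    then obtain l where l: "l < m" "z = W l" by auto
    show "z \<in> {y. 0 \<le> cross (W (nx m j) - W j) (y - W j)}"
      using assms(1,2) l unfolding PG_def
      by (cases "l = j \<or> l = nx m j") (auto simp: cross_eq less_imp_le)
  qed
  then have "convex hull (W ` {..<m}) \<subseteq> {y. 0 \<le> cross (W (nx m j) - W j) (y - W j)}"
    by (intro hull_minimal halfplane_convex)
  then show ?thesis using assms(3) by auto
qed

lemma HP0:
  assumes "y \<in> closed_segment p q"
  shows "cross (q - p) (y - p) = 0"
proof -
  obtain u where "y = (1 - u) *\<^sub>R p + u *\<^sub>R q" using assms by (auto simp: in_segment)
  then have e: "y - p = u *\<^sub>R (q - p)" by (simp add: algebra_simps)
  show ?thesis unfolding e by (simp add: cross_eq algebra_simps)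
qed

lemma vert_in_hull: "l < m \<Longrightarrow> W l \<in> convex hull (W ` {..<m})"
  by (simp add: hull_inc)

lemma VoS:
  assumes "PG m W" "l < m" "g < m" "W l \<in> closed_segment (W g) (W (nx m g))"
  shows "l = g \<or> l = nx m g"
  using assms HP0[OF assms(4)] unfolding PG_def by force

lemma OSD:
  assumes pg: "PG m W" and "f < m" "g < m"
    and y1: "y \<in> open_segment (W f) (W (nx m f))"
    and y2: "y \<in> closed_segment (W g) (W (nx m g))"
  shows "f = g"
proof (rule ccontr)
  assume fg: "f \<noteq> g"
  have m3: "3 \<le> m" using pg by (simp add: PG_def)
  obtain u where u: "0 < u" "u < 1" "y = (1 - u) *\<^sub>R W f + u *\<^sub>R W (nx m f)"
    using y1 by (auto simp: in_segment)
  let ?a = "W (nx m g) - W g"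
  have "cross ?a (y - W g) = (1 - u) * cross ?a (W f - W g) + u * cross ?a (W (nx m f) - W g)"
    unfolding u(3) by (rule cross_comb) simp
  moreover have "cross ?a (y - W g) = 0" using HP0[OF y2] .
  moreover have c1: "0 \<le> cross ?a (W f - W g)" using HP[OF pg \<open>g < m\<close> vert_in_hull[OF \<open>f < m\<close>]] .
  moreover have c2: "0 \<le> cross ?a (W (nx m f) - W g)"
    using HP[OF pg \<open>g < m\<close> vert_in_hull[OF nxpv(1)[OF m3 \<open>f < m\<close>]]] .
  ultimately have z1: "cross ?a (W f - W g) = 0" and z2: "cross ?a (W (nx m f) - W g) = 0"
    using u(1,2) by (smt (verit) mult_pos_pos mult_nonneg_nonneg)+
  have s: "\<forall>l<m. l \<noteq> g \<and> l \<noteq> nx m g \<longrightarrow> 0 < cross ?a (W l - W g)"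
    using pg \<open>g < m\<close> unfolding PG_def by blast
  have "f = nx m g" using s z1 fg \<open>f < m\<close> by force
  moreover have "nx m f = g \<or> nx m f = nx m g" using s z2 nxpv(1)[OF m3 \<open>f < m\<close>] by force
  ultimately show False using fg nx_inj[OF \<open>f < m\<close> \<open>g < m\<close>] nxpv(7)[OF m3 \<open>g < m\<close>] by auto
qed

lemma seg_sub_poly:
  assumes "PG m W" "g < m"
  shows "closed_segment (W g) (W (nx m g)) \<subseteq> convex hull (W ` {..<m})"
proof -
  have m3: "3 \<le> m" using assms by (simp add: PG_def)
  show ?thesis
    by (rule closed_segment_subset[OF vert_in_hull[OF assms(2)] vert_in_hull[OF nxpv(1)[OF m3 assms(2)]]])
       (rule convex_convex_hull)
qed

lemma norm_diff_sq: "(norm (a - b :: complex))^2 = (norm a)^2 + (norm b)^2 - 2 * inner a b"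
  by (simp add: power2_norm_eq_inner inner_diff_left inner_diff_right inner_commute)

lemma norm_add_sq: "(norm (a + b :: complex))^2 = (norm a)^2 + 2 * inner a b + (norm b)^2"
  by (simp add: power2_norm_eq_inner inner_add_left inner_add_right inner_commute)

lemma ANG:
  assumes pg: "PG m W" and c: "c < m"
    and u: "u \<in> closed_segment (W c) (W (pv m c))"
    and w: "w \<in> closed_segment (W c) (W (nx m c))"
  shows "(norm (u - W c))^2 + (norm (w - W c))^2 \<le> (dist u w)^2"
proof -
  obtain l where l: "0 \<le> l" "u = (1 - l) *\<^sub>R W c + l *\<^sub>R W (pv m c)" using u by (auto simp: in_segment)
  obtain r where r: "0 \<le> r" "w = (1 - r) *\<^sub>R W c + r *\<^sub>R W (nx m c)" using w by (auto simp: in_segment)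
  have eu: "u - W c = l *\<^sub>R (W (pv m c) - W c)" using l(2) by (simp add: algebra_simps)
  have ew: "w - W c = r *\<^sub>R (W (nx m c) - W c)" using r(2) by (simp add: algebra_simps)
  have i0: "inner (W (pv m c) - W c) (W (nx m c) - W c) \<le> 0" using pg c by (simp add: PG_def)
  have "inner (u - W c) (w - W c) = (l * r) * inner (W (pv m c) - W c) (W (nx m c) - W c)"
    by (simp add: eu ew)
  also have "\<dots> \<le> 0" using i0 l(1) r(1) by (simp add: mult_nonneg_nonpos)
  finally have ip: "inner (u - W c) (w - W c) \<le> 0" .
  have "dist u w = norm ((u - W c) - (w - W c))" by (simp add: dist_norm)
  then have "(dist u w)^2 = (norm (u - W c))^2 + (norm (w - W c))^2 - 2 * inner (u - W c) (w - W c)"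
    using norm_diff_sq[of "u - W c" "w - W c"] by simp
  then show ?thesis using ip by linarith
qed

lemma SegExt:
  fixes x y S E :: complex
  assumes x: "x \<in> closed_segment S E" and y: "y \<in> open_segment S E" and xy: "x \<noteq> y"
  shows "\<exists>l>0. y + l *\<^sub>R (y - x) \<in> closed_segment S E"
proof -
  obtain a where a: "x = (1 - a) *\<^sub>R S + a *\<^sub>R E" using x by (auto simp: in_segment)
  obtain b where b: "0 < b" "b < 1" "y = (1 - b) *\<^sub>R S + b *\<^sub>R E" using y by (auto simp: in_segment)
  have ab: "a \<noteq> b" using xy a b(3) by auto
  have yx: "y - x = (b - a) *\<^sub>R (E - S)" unfolding a b(3) by (simp add: algebra_simps)
  show ?thesis
  proof (cases "a < b")
    case True
    define l where "l = (1 - b) / (b - a)"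
    have l0: "l > 0" using True b by (simp add: l_def)
    have lab: "l * (b - a) = 1 - b" using True by (simp add: l_def)
    have "y + l *\<^sub>R (y - x) = y + (1 - b) *\<^sub>R (E - S)" by (simp only: yx scaleR_scaleR lab)
    also have "\<dots> = E" by (simp add: b(3) algebra_simps)
    finally show ?thesis using l0 by auto
  next
    case False
    then have ba: "b < a" using ab by simp
    define l where "l = b / (a - b)"
    have l0: "l > 0" using ba b by (simp add: l_def)
    have lab: "l * (b - a) = - b" using ba by (simp add: l_def field_simps)
    have "y + l *\<^sub>R (y - x) = y + (- b) *\<^sub>R (E - S)" by (simp only: yx scaleR_scaleR lab)
    also have "\<dots> = S" by (simp add: b(3) algebra_simps)
    finally show ?thesis using l0 by auto
  qed
qed

lemma FO:
  fixes x y a :: complex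
  assumes e0: "0 < e0" and h: "\<forall>e. 0 < e \<and> e \<le> e0 \<longrightarrow> norm (x - y) \<le> norm (x + e *\<^sub>R a - y)"
  shows "0 \<le> inner a (x - y)"
proof (rule ccontr)
  assume "\<not> 0 \<le> inner a (x - y)"
  then have c: "0 < - inner a (x - y)" by simp
  define c where "c = - inner a (x - y)"
  define A where "A = (norm a)^2"
  have cpos: "0 < c" using c by (simp add: c_def)
  then have a0: "a \<noteq> 0" by (auto simp: c_def)
  then have Apos: "0 < A" by (simp add: A_def)
  define e where "e = min e0 (c / A)"
  have epos: "0 < e" using e0 cpos Apos by (simp add: e_def)
  have ele: "e \<le> e0" by (simp add: e_def)
  have "e \<le> c / A" by (simp add: e_def)
  then have eA: "e * A \<le> c" using Apos by (simp add: pos_le_divide_eq)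
  have e2: "e * (e * A) \<le> e * c" using eA epos by (simp add: mult_left_mono)
  have "(norm (x + e *\<^sub>R a - y))^2 = (norm ((x - y) + e *\<^sub>R a))^2" by (simp add: algebra_simps)
  also have "\<dots> = (norm (x - y))^2 + 2 * inner (x - y) (e *\<^sub>R a) + (norm (e *\<^sub>R a))^2"
    by (rule norm_add_sq)
  also have "\<dots> = (norm (x - y))^2 - 2 * (e * c) + e * (e * A)"
    by (simp add: c_def A_def inner_commute power2_eq_square algebra_simps)
  also have "\<dots> < (norm (x - y))^2" using e2 epos cpos by (smt (verit) mult_pos_pos)
  finally have lt: "(norm (x + e *\<^sub>R a - y))^2 < (norm (x - y))^2" .
  have "norm (x - y) \<le> norm (x + e *\<^sub>R a - y)" using h epos ele by blast
  then have "(norm (x - y))^2 \<le> (norm (x + e *\<^sub>R a - y))^2" by (simp add: power_mono)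
  then show False using lt by linarith
qed

lemma ALG1:
  assumes "0 < cross a b" "inner a z \<le> 0" "inner b z \<le> 0" "0 \<le> cross a z" "cross b z \<le> 0"
  shows "z = 0"
proof -
  have nz: "(norm z)^2 = Re z * Re z + Im z * Im z" using cmod_power2[of z] by (simp add: power2_eq_square)
  have id: "cross a b * (norm z)^2 = cross z b * inner a z + cross a z * inner b z"
    unfolding nz by (simp add: cross_eq inner_complex_def algebra_simps)
  have "cross z b = - cross b z" by (simp add: cross_eq)
  then have "0 \<le> cross z b" using assms by simp
  then have "cross z b * inner a z \<le> 0" "cross a z * inner b z \<le> 0"
    using assms by (simp_all add: mult_nonneg_nonpos)
  then have "cross a b * (norm z)^2 \<le> 0" using id by linarith
  then have "(norm z)^2 \<le> 0" using assms(1) by (simp add: mult_le_0_iff)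
  then show ?thesis by simp
qed

lemma PAR:
  assumes z: "z \<noteq> 0" and i1: "inner e z = 0" and i2: "inner h z = 0"
  shows "cross e h = 0"
proof -
  have "cross e h * Re z = Im h * inner e z - Im e * inner h z"
    by (simp add: cross_eq inner_complex_def algebra_simps)
  moreover have "cross e h * Im z = Re e * inner h z - Re h * inner e z"
    by (simp add: cross_eq inner_complex_def algebra_simps)
  ultimately have "cross e h * Re z = 0" "cross e h * Im z = 0" using i1 i2 by simp_all
  then show ?thesis using z by (auto simp: complex_eq_iff)
qed

lemma PAR2:
  assumes cr: "cross e h = 0" and e: "e \<noteq> 0"
  shows "h = (inner h e / (norm e)^2) *\<^sub>R e"
proof -
  have ne: "(norm e)^2 \<noteq> 0" using e by simp
  have nz: "(norm e)^2 = Re e * Re e + Im e * Im e" using cmod_power2[of e] by (simp add: power2_eq_square)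
  have r: "(norm e)^2 * Re h - inner h e * Re e = - Im e * cross e h"
    unfolding nz by (simp add: cross_eq inner_complex_def algebra_simps)
  have i: "(norm e)^2 * Im h - inner h e * Im e = Re e * cross e h"
    unfolding nz by (simp add: cross_eq inner_complex_def algebra_simps)
  have "(norm e)^2 *\<^sub>R h = inner h e *\<^sub>R e"
    using r i cr by (simp add: complex_eq_iff)
  then have "(1 / (norm e)^2) *\<^sub>R ((norm e)^2 *\<^sub>R h) = (1 / (norm e)^2) *\<^sub>R (inner h e *\<^sub>R e)" by simp
  then show ?thesis using ne by simp
qed

lemma seg_mem: "0 \<le> u \<Longrightarrow> u \<le> 1 \<Longrightarrow> (1 - u) *\<^sub>R a + u *\<^sub>R b \<in> closed_segment a b"
  by (auto simp: in_segment)

lemma CORNER: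
  assumes "PG m W" "c < m"
    "u \<in> closed_segment (W c) (W (pv m c))" "w \<in> closed_segment (W c) (W (nx m c))"
  shows "norm (u - W c) \<le> dist u w" "norm (w - W c) \<le> dist u w"
proof -
  have h: "(norm (u - W c))^2 + (norm (w - W c))^2 \<le> (dist u w)^2" by (rule ANG[OF assms])
  have "(norm (u - W c))^2 \<le> (dist u w)^2" "(norm (w - W c))^2 \<le> (dist u w)^2"
    using h zero_le_power2[of "norm (u - W c)"] zero_le_power2[of "norm (w - W c)"] by linarith+
  then show "norm (u - W c) \<le> dist u w" "norm (w - W c) \<le> dist u w"
    using power2_le_imp_le zero_le_dist by blast+
qed

definition NA :: "nat \<Rightarrow> nat \<Rightarrow> nat \<Rightarrow> bool" where
  "NA m f g \<longleftrightarrow> f \<noteq> g \<and> g \<noteq> nx m f \<and> f \<noteq> nx m g"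

lemma NA_sym: "NA m f g = NA m g f" by (auto simp: NA_def)

lemma CaseA:
  assumes pg: "PG m W" and sb: "\<forall>j<m. L \<le> norm (W (nx m j) - W j)"
    and mn: "\<forall>f g u v. f < m \<longrightarrow> g < m \<longrightarrow> NA m f g \<longrightarrow> u \<in> closed_segment (W f) (W (nx m f))
        \<longrightarrow> v \<in> closed_segment (W g) (W (nx m g)) \<longrightarrow> dist x0 y0 \<le> dist u v"
    and lt: "dist x0 y0 < L" and j: "j < m" and x0: "x0 = W j"
    and f0: "f0 < m" and g0: "g0 < m" and na: "NA m f0 g0"
    and xs: "x0 \<in> closed_segment (W f0) (W (nx m f0))"
    and ys: "y0 \<in> closed_segment (W g0) (W (nx m g0))"
  shows False
proof -
  have m3: "3 \<le> m" using pg by (simp add: PG_def)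
  note N = nxpv[OF m3 j]
  have "j = f0 \<or> j = nx m f0" using VoS[OF pg j f0] xs x0 by simp
  then have f0j: "f0 = j \<or> f0 = pv m j" using nxpv(4)[OF m3 f0] by auto
  have y0p: "y0 \<in> convex hull (W ` {..<m})" using seg_sub_poly[OF pg g0] ys by auto
  have na1: "f0 \<noteq> g0" and na2: "g0 \<noteq> nx m f0" and na3: "f0 \<noteq> nx m g0"
    using na by (simp_all add: NA_def)
  have nxpg: "nx m (pv m g0) = g0" "pv m (nx m g0) = g0" using nxpv(3,4)[OF m3 g0] by simp_all
  have naj: "NA m j g0"
  proof -
    have "j \<noteq> g0"
    proof
      assume jg: "j = g0"
      from f0j show False
      proof
        assume "f0 = j" then show False using na1 jg by simp
      next
        assume "f0 = pv m j" then have "nx m f0 = j" using N(3) by simp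
        then show False using na2 jg by simp
      qed
    qed
    moreover have "g0 \<noteq> nx m j"
    proof
      assume g: "g0 = nx m j"
      have "W j \<in> closed_segment (W (nx m j)) (W (pv m (nx m j)))" using N(4) by simp
      moreover have "y0 \<in> closed_segment (W (nx m j)) (W (nx m (nx m j)))" using ys g by simp
      ultimately have "norm (W j - W (nx m j)) \<le> dist (W j) y0" by (rule CORNER[OF pg N(1)])
      moreover have "L \<le> norm (W (nx m j) - W j)" using sb j by blast
      ultimately show False using lt x0 by (simp add: norm_minus_commute)
    qed
    moreover have "j \<noteq> nx m g0"
    proof
      assume jg: "j = nx m g0"
      from f0j show False
      proof
        assume "f0 = j" then show False using na3 jg by simp
      next
        assume "f0 = pv m j" then have "f0 = g0" using jg nxpg(2) by simp
        then show False using na1 by simp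
      qed
    qed
    ultimately show ?thesis by (simp add: NA_def)
  qed
  have napj: "NA m (pv m j) g0"
  proof -
    have "pv m j \<noteq> g0"
    proof
      assume jg: "pv m j = g0"
      from f0j show False
      proof
        assume "f0 = j" then have "nx m g0 = f0" using jg N(3) by simp
        then show False using na3 by simp
      next
        assume "f0 = pv m j" then show False using na1 jg by simp
      qed
    qed
    moreover have "g0 \<noteq> nx m (pv m j)"
    proof
      assume jg: "g0 = nx m (pv m j)"
      then have jg': "g0 = j" using N(3) by simp
      from f0j show False
      proof
        assume "f0 = j" then show False using na1 jg' by simp
      next
        assume "f0 = pv m j" then have "nx m f0 = j" using N(3) by simp
        then show False using na2 jg' by simp
      qed
    qed
    moreover have "pv m j \<noteq> nx m g0"
    proof
      assume g: "pv m j = nx m g0"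
      have g0e: "g0 = pv m (pv m j)" using g nxpg(2) by simp
      have ys': "y0 \<in> closed_segment (W (nx m g0)) (W g0)" using ys closed_segment_commute by blast
      have e1: "W (nx m g0) = W (pv m j)" using g by simp
      have e2: "W g0 = W (pv m (pv m j))" using g0e by simp
      have "y0 \<in> closed_segment (W (pv m j)) (W (pv m (pv m j)))"
        using ys' unfolding e1 e2 .
      moreover have "W j \<in> closed_segment (W (pv m j)) (W (nx m (pv m j)))" using N(3) by simp
      ultimately have "norm (W j - W (pv m j)) \<le> dist y0 (W j)" by (rule CORNER[OF pg N(2)])
      moreover have "L \<le> norm (W (nx m (pv m j)) - W (pv m j))" using sb N(2) by blast
      ultimately show False using lt x0 N(3) by (simp add: dist_commute)
    qed
    ultimately show ?thesis by (simp add: NA_def)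
  qed
  define a where "a = W (nx m j) - W j"
  define b where "b = W (pv m j) - W j"
  have ia: "0 \<le> inner a (x0 - y0)"
  proof (rule FO[of 1])
    show "\<forall>e. 0 < e \<and> e \<le> 1 \<longrightarrow> norm (x0 - y0) \<le> norm (x0 + e *\<^sub>R a - y0)"
    proof (intro allI impI)
      fix e :: real assume e: "0 < e \<and> e \<le> 1"
      have "x0 + e *\<^sub>R a = (1 - e) *\<^sub>R W j + e *\<^sub>R W (nx m j)" by (simp add: x0 a_def algebra_simps)
      then have "x0 + e *\<^sub>R a \<in> closed_segment (W j) (W (nx m j))" using e seg_mem[of e] by simp
      then have "dist x0 y0 \<le> dist (x0 + e *\<^sub>R a) y0" using mn[rule_format, OF j g0 naj _ ys] by blast
      then show "norm (x0 - y0) \<le> norm (x0 + e *\<^sub>R a - y0)" by (simp add: dist_norm)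
    qed
  qed simp
  have ib: "0 \<le> inner b (x0 - y0)"
  proof (rule FO[of 1])
    show "\<forall>e. 0 < e \<and> e \<le> 1 \<longrightarrow> norm (x0 - y0) \<le> norm (x0 + e *\<^sub>R b - y0)"
    proof (intro allI impI)
      fix e :: real assume e: "0 < e \<and> e \<le> 1"
      have "x0 + e *\<^sub>R b = (1 - (1 - e)) *\<^sub>R W (pv m j) + (1 - e) *\<^sub>R W j" by (simp add: x0 b_def algebra_simps)
      then have "x0 + e *\<^sub>R b \<in> closed_segment (W (pv m j)) (W (nx m (pv m j)))"
        using e N seg_mem[of "1 - e"] by simp
      then have "dist x0 y0 \<le> dist (x0 + e *\<^sub>R b) y0" using mn[rule_format, OF N(2) g0 napj _ ys] by blast
      then show "norm (x0 - y0) \<le> norm (x0 + e *\<^sub>R b - y0)" by (simp add: dist_norm)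
    qed
  qed simp
  define z where "z = y0 - x0"
  have iaz: "inner a z \<le> 0" using ia by (simp add: z_def inner_diff_right)
  have ibz: "inner b z \<le> 0" using ib by (simp add: z_def inner_diff_right)
  have caz: "0 \<le> cross a z" using HP[OF pg j y0p] by (simp add: a_def z_def x0)
  have "0 \<le> cross (W (nx m (pv m j)) - W (pv m j)) (y0 - W (pv m j))" using HP[OF pg N(2) y0p] .
  moreover have "cross (W j - W (pv m j)) (y0 - W (pv m j)) = - cross b z"
    by (simp add: b_def z_def x0 cross_eq algebra_simps)
  ultimately have cbz: "cross b z \<le> 0" using N by simp
  have "\<forall>j<m. \<forall>l<m. l \<noteq> j \<and> l \<noteq> nx m j \<longrightarrow> 0 < cross (W (nx m j) - W j) (W l - W j)"
    using pg by (simp add: PG_def)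
  then have cab: "0 < cross a b" unfolding a_def b_def using j N(2,6,8) by simp
  have "z = 0" by (rule ALG1[OF cab iaz ibz caz cbz])
  then have "W j \<in> closed_segment (W g0) (W (nx m g0))" using ys by (simp add: z_def x0)
  then have "j = g0 \<or> j = nx m g0" using VoS[OF pg j g0] by simp
  then show False using naj by (auto simp: NA_def)
qed

lemma SLIDE:
  fixes al be c :: real
  assumes "0 < al" "al < 1" "0 < be" "be < 1" "c \<noteq> 0"
  shows "\<exists>s\<ge>0. al + s \<le> 1 \<and> 0 \<le> be + s / c \<and> be + s / c \<le> 1 \<and>
           (al + s = 1 \<or> be + s / c = 1 \<or> be + s / c = 0)"
proof (cases "0 < c")
  case True
  show ?thesis
  proof (cases "1 - al \<le> c * (1 - be)")
    case True
    have "(1 - al) / c \<le> 1 - be" using True \<open>0 < c\<close> by (simp add: divide_le_eq mult.commute)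
    moreover have "0 \<le> (1 - al) / c" using assms \<open>0 < c\<close> by simp
    ultimately show ?thesis using assms by (intro exI[of _ "1 - al"]) auto
  next
    case False
    have "c * (1 - be) / c = 1 - be" using \<open>0 < c\<close> by simp
    then show ?thesis using assms False \<open>0 < c\<close> by (intro exI[of _ "c * (1 - be)"]) auto
  qed
next
  case False
  then have c: "c < 0" using assms by simp
  show ?thesis
  proof (cases "1 - al \<le> - c * be")
    case True
    have "1 - al \<le> - be * c" using True by (simp add: mult.commute)
    then have "- be \<le> (1 - al) / c" using c by (simp add: le_divide_eq)
    moreover have "(1 - al) / c \<le> 0" using assms c by (simp add: divide_nonneg_neg)
    ultimately show ?thesis using assms by (intro exI[of _ "1 - al"]) auto
  next
    case False
    have "(- c * be) / c = - be" using c by simp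
    moreover have "c * be \<le> 0" using c assms by (simp add: mult_neg_pos less_imp_le)
    ultimately show ?thesis using assms False c by (intro exI[of _ "- c * be"]) auto
  qed
qed

lemma CaseC:
  assumes pg: "PG m W"
    and mn: "\<forall>f g u v. f < m \<longrightarrow> g < m \<longrightarrow> NA m f g \<longrightarrow> u \<in> closed_segment (W f) (W (nx m f))
        \<longrightarrow> v \<in> closed_segment (W g) (W (nx m g)) \<longrightarrow> dist x0 y0 \<le> dist u v"
    and f0: "f0 < m" and g0: "g0 < m" and na: "NA m f0 g0"
    and xo: "x0 \<in> open_segment (W f0) (W (nx m f0))"
    and yo: "y0 \<in> open_segment (W g0) (W (nx m g0))"
  shows "\<exists>x1 y1. dist x1 y1 = dist x0 y0 \<and> x1 \<in> closed_segment (W f0) (W (nx m f0)) \<and>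
           y1 \<in> closed_segment (W g0) (W (nx m g0)) \<and>
           (x1 = W f0 \<or> x1 = W (nx m f0) \<or> y1 = W g0 \<or> y1 = W (nx m g0))"
proof -
  define p where "p = W f0"
  define q where "q = W (nx m f0)"
  define w where "w = W g0"
  define w' where "w' = W (nx m g0)"
  define e where "e = q - p"
  define h where "h = w' - w"
  obtain al where al: "0 < al" "al < 1" "x0 = (1 - al) *\<^sub>R p + al *\<^sub>R q"
    using xo by (auto simp: in_segment p_def q_def)
  obtain be where be: "0 < be" "be < 1" "y0 = (1 - be) *\<^sub>R w + be *\<^sub>R w'"
    using yo by (auto simp: in_segment w_def w'_def)
  have pq: "p \<noteq> q" using xo by (auto simp: in_segment p_def q_def)
  have ww: "w \<noteq> w'" using yo by (auto simp: in_segment w_def w'_def)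
  have e0: "e \<noteq> 0" using pq by (simp add: e_def)
  have h0: "h \<noteq> 0" using ww by (simp add: h_def)
  have xeq: "\<And>t. x0 + (t - al) *\<^sub>R e = (1 - t) *\<^sub>R p + t *\<^sub>R q"
    by (simp add: al(3) e_def algebra_simps)
  have yeq: "\<And>t. y0 + (t - be) *\<^sub>R h = (1 - t) *\<^sub>R w + t *\<^sub>R w'"
    by (simp add: be(3) h_def algebra_simps)
  have xseg: "\<And>t. 0 \<le> t \<Longrightarrow> t \<le> 1 \<Longrightarrow> x0 + (t - al) *\<^sub>R e \<in> closed_segment (W f0) (W (nx m f0))"
    unfolding xeq p_def q_def by (rule seg_mem)
  have yseg: "\<And>t. 0 \<le> t \<Longrightarrow> t \<le> 1 \<Longrightarrow> y0 + (t - be) *\<^sub>R h \<in> closed_segment (W g0) (W (nx m g0))"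
    unfolding yeq w_def w'_def by (rule seg_mem)
  have xs: "x0 \<in> closed_segment (W f0) (W (nx m f0))" using xo by (simp add: open_segment_def)
  have ys: "y0 \<in> closed_segment (W g0) (W (nx m g0))" using yo by (simp add: open_segment_def)
  have i1: "0 \<le> inner e (x0 - y0)"
  proof (rule FO[of "1 - al"])
    show "\<forall>ee. 0 < ee \<and> ee \<le> 1 - al \<longrightarrow> norm (x0 - y0) \<le> norm (x0 + ee *\<^sub>R e - y0)"
    proof (intro allI impI)
      fix ee :: real assume ee: "0 < ee \<and> ee \<le> 1 - al"
      have "x0 + ((al + ee) - al) *\<^sub>R e \<in> closed_segment (W f0) (W (nx m f0))"
        using ee al by (intro xseg) auto
      then have "dist x0 y0 \<le> dist (x0 + ee *\<^sub>R e) y0"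
        using mn[rule_format, OF f0 g0 na _ ys] by simp
      then show "norm (x0 - y0) \<le> norm (x0 + ee *\<^sub>R e - y0)" by (simp add: dist_norm)
    qed
  qed (use al in simp)
  have i2: "0 \<le> inner (- e) (x0 - y0)"
  proof (rule FO[of al])
    show "\<forall>ee. 0 < ee \<and> ee \<le> al \<longrightarrow> norm (x0 - y0) \<le> norm (x0 + ee *\<^sub>R (- e) - y0)"
    proof (intro allI impI)
      fix ee :: real assume ee: "0 < ee \<and> ee \<le> al"
      have "x0 + ((al - ee) - al) *\<^sub>R e \<in> closed_segment (W f0) (W (nx m f0))"
        using ee al by (intro xseg) auto
      then have "dist x0 y0 \<le> dist (x0 + ee *\<^sub>R (- e)) y0"
        using mn[rule_format, OF f0 g0 na _ ys] by simp
      then show "norm (x0 - y0) \<le> norm (x0 + ee *\<^sub>R (- e) - y0)" by (simp add: dist_norm)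
    qed
  qed (use al in simp)
  have i3: "0 \<le> inner h (y0 - x0)"
  proof (rule FO[of "1 - be"])
    show "\<forall>ee. 0 < ee \<and> ee \<le> 1 - be \<longrightarrow> norm (y0 - x0) \<le> norm (y0 + ee *\<^sub>R h - x0)"
    proof (intro allI impI)
      fix ee :: real assume ee: "0 < ee \<and> ee \<le> 1 - be"
      have "y0 + ((be + ee) - be) *\<^sub>R h \<in> closed_segment (W g0) (W (nx m g0))"
        using ee be by (intro yseg) auto
      then have "dist x0 y0 \<le> dist x0 (y0 + ee *\<^sub>R h)"
        using mn[rule_format, OF f0 g0 na xs] by simp
      then show "norm (y0 - x0) \<le> norm (y0 + ee *\<^sub>R h - x0)" by (metis dist_commute dist_norm)
    qed
  qed (use be in simp)
  have i4: "0 \<le> inner (- h) (y0 - x0)"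
  proof (rule FO[of be])
    show "\<forall>ee. 0 < ee \<and> ee \<le> be \<longrightarrow> norm (y0 - x0) \<le> norm (y0 + ee *\<^sub>R (- h) - x0)"
    proof (intro allI impI)
      fix ee :: real assume ee: "0 < ee \<and> ee \<le> be"
      have "y0 + ((be - ee) - be) *\<^sub>R h \<in> closed_segment (W g0) (W (nx m g0))"
        using ee be by (intro yseg) auto
      then have "dist x0 y0 \<le> dist x0 (y0 + ee *\<^sub>R (- h))"
        using mn[rule_format, OF f0 g0 na xs] by simp
      then show "norm (y0 - x0) \<le> norm (y0 + ee *\<^sub>R (- h) - x0)" by (metis dist_commute dist_norm)
    qed
  qed (use be in simp)
  define z where "z = y0 - x0"
  have iez: "inner e z = 0"
  proof -
    have "inner e (x0 - y0) = 0" using i1 i2 by simp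
    moreover have "inner e z = - inner e (x0 - y0)" by (simp add: z_def inner_diff_right)
    ultimately show ?thesis by simp
  qed
  have ihz: "inner h z = 0" using i3 i4 by (simp add: z_def)
  have z0: "z \<noteq> 0"
  proof
    assume "z = 0"
    then have "x0 \<in> closed_segment (W g0) (W (nx m g0))" using ys by (simp add: z_def)
    then have "f0 = g0" by (rule OSD[OF pg f0 g0 xo])
    then show False using na by (simp add: NA_def)
  qed
  have cr: "cross e h = 0" by (rule PAR[OF z0 iez ihz])
  define c where "c = inner h e / (norm e)^2"
  have hc: "h = c *\<^sub>R e" unfolding c_def by (rule PAR2[OF cr e0])
  have c0: "c \<noteq> 0" using hc h0 by auto
  obtain s where s: "0 \<le> s" "al + s \<le> 1" "0 \<le> be + s / c" "be + s / c \<le> 1"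
      "al + s = 1 \<or> be + s / c = 1 \<or> be + s / c = 0"
    using SLIDE[OF al(1,2) be(1,2) c0] by blast
  have sh: "(s / c) *\<^sub>R h = s *\<^sub>R e" using c0 by (simp add: hc)
  define x1 where "x1 = x0 + s *\<^sub>R e"
  define y1 where "y1 = y0 + s *\<^sub>R e"
  have x1e: "x1 = x0 + ((al + s) - al) *\<^sub>R e" by (simp add: x1_def)
  have y1e: "y1 = y0 + ((be + s / c) - be) *\<^sub>R h" by (simp add: y1_def sh)
  have x1s: "x1 \<in> closed_segment (W f0) (W (nx m f0))" unfolding x1e using s al by (intro xseg) auto
  have y1s: "y1 \<in> closed_segment (W g0) (W (nx m g0))" unfolding y1e using s by (intro yseg) auto
  have d: "dist x1 y1 = dist x0 y0" by (simp add: x1_def y1_def dist_norm)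
  have "x1 = W (nx m f0) \<or> y1 = W (nx m g0) \<or> y1 = W g0"
  proof -
    { assume "al + s = 1" then have "x1 = q" unfolding x1e xeq by simp }
    moreover
    { assume "be + s / c = 1" then have "y1 = w'" unfolding y1e yeq by simp }
    moreover
    { assume "be + s / c = 0" then have "y1 = w" unfolding y1e yeq by simp }
    ultimately show ?thesis using s(5) by (auto simp: q_def w_def w'_def)
  qed
  then show ?thesis using d x1s y1s by blast
qed

lemma CaseAB:
  assumes pg: "PG m W" and sb: "\<forall>j<m. L \<le> norm (W (nx m j) - W j)"
    and mn: "\<forall>f g u v. f < m \<longrightarrow> g < m \<longrightarrow> NA m f g \<longrightarrow> u \<in> closed_segment (W f) (W (nx m f))
        \<longrightarrow> v \<in> closed_segment (W g) (W (nx m g)) \<longrightarrow> dist x0 y0 \<le> dist u v"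
    and lt: "dist x0 y0 < L"
    and f0: "f0 < m" and g0: "g0 < m" and na: "NA m f0 g0"
    and xs: "x0 \<in> closed_segment (W f0) (W (nx m f0))"
    and ys: "y0 \<in> closed_segment (W g0) (W (nx m g0))"
    and v: "x0 = W f0 \<or> x0 = W (nx m f0) \<or> y0 = W g0 \<or> y0 = W (nx m g0)"
  shows False
proof -
  have m3: "3 \<le> m" using pg by (simp add: PG_def)
  have mn': "\<forall>f g u v. f < m \<longrightarrow> g < m \<longrightarrow> NA m f g \<longrightarrow> u \<in> closed_segment (W f) (W (nx m f))
        \<longrightarrow> v \<in> closed_segment (W g) (W (nx m g)) \<longrightarrow> dist y0 x0 \<le> dist u v"
  proof (intro allI impI)
    fix f g u v assume h: "f < m" "g < m" "NA m f g" "u \<in> closed_segment (W f) (W (nx m f))"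
      "v \<in> closed_segment (W g) (W (nx m g))"
    have "NA m g f" using h(3) NA_sym by blast
    then have "dist x0 y0 \<le> dist v u" using mn h by blast
    then show "dist y0 x0 \<le> dist u v" by (simp add: dist_commute)
  qed
  have lt': "dist y0 x0 < L" using lt by (simp add: dist_commute)
  have na': "NA m g0 f0" using na NA_sym by blast
  from v show False
  proof (elim disjE)
    assume "x0 = W f0" then show False by (rule CaseA[OF pg sb mn lt f0 _ f0 g0 na xs ys])
  next
    assume "x0 = W (nx m f0)" then show False by (rule CaseA[OF pg sb mn lt nxpv(1)[OF m3 f0] _ f0 g0 na xs ys])
  next
    assume "y0 = W g0" then show False by (rule CaseA[OF pg sb mn' lt' g0 _ g0 f0 na' ys xs])
  next
    assume "y0 = W (nx m g0)" then show False by (rule CaseA[OF pg sb mn' lt' nxpv(1)[OF m3 g0] _ g0 f0 na' ys xs])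
  qed
qed

lemma LD:
  assumes pg: "PG m W" and sb: "\<forall>j<m. L \<le> norm (W (nx m j) - W j)"
    and f: "f < m" and g: "g < m" and na: "NA m f g"
    and x: "x \<in> closed_segment (W f) (W (nx m f))"
    and y: "y \<in> closed_segment (W g) (W (nx m g))"
  shows "L \<le> dist x y"
proof (rule ccontr)
  assume "\<not> L \<le> dist x y"
  then have lt: "dist x y < L" by simp
  define NAS where "NAS = {(f, g). f < m \<and> g < m \<and> NA m f g}"
  define K where "K = (\<Union>pp\<in>NAS. closed_segment (W (fst pp)) (W (nx m (fst pp))) \<times>
                          closed_segment (W (snd pp)) (W (nx m (snd pp))))"
  have fin: "finite NAS"
    by (rule finite_subset[of _ "{..<m} \<times> {..<m}"]) (auto simp: NAS_def)
  have cK: "compact K" unfolding K_def using fin by (intro compact_UN compact_Times compact_segment)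
  have xyK: "(x, y) \<in> K" unfolding K_def NAS_def using f g na x y by force
  have cont: "continuous_on K (\<lambda>pp. dist (fst pp) (snd pp))" by (intro continuous_intros)
  obtain pm where pm: "pm \<in> K" "\<forall>qq\<in>K. dist (fst pm) (snd pm) \<le> dist (fst qq) (snd qq)"
    using continuous_attains_inf[OF cK _ cont] xyK by blast
  obtain x0 y0 where pmxy: "pm = (x0, y0)" by (cases pm)
  obtain f0 g0 where fg0: "f0 < m" "g0 < m" "NA m f0 g0"
    and xs: "x0 \<in> closed_segment (W f0) (W (nx m f0))"
    and ys: "y0 \<in> closed_segment (W g0) (W (nx m g0))"
    using pm(1) unfolding pmxy K_def NAS_def by auto
  have mn: "\<forall>f g u v. f < m \<longrightarrow> g < m \<longrightarrow> NA m f g \<longrightarrow> u \<in> closed_segment (W f) (W (nx m f))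
        \<longrightarrow> v \<in> closed_segment (W g) (W (nx m g)) \<longrightarrow> dist x0 y0 \<le> dist u v"
  proof (intro allI impI)
    fix f g u v assume h: "f < m" "g < m" "NA m f g" "u \<in> closed_segment (W f) (W (nx m f))"
      "v \<in> closed_segment (W g) (W (nx m g))"
    then have "(u, v) \<in> K" unfolding K_def NAS_def by force
    then show "dist x0 y0 \<le> dist u v" using pm(2) pmxy by force
  qed
  have lt0: "dist x0 y0 < L" using mn f g na x y lt by force
  show False
  proof (cases "x0 = W f0 \<or> x0 = W (nx m f0) \<or> y0 = W g0 \<or> y0 = W (nx m g0)")
    case True
    show False by (rule CaseAB[OF pg sb mn lt0 fg0 xs ys True])
  next
    case False
    then have xo: "x0 \<in> open_segment (W f0) (W (nx m f0))"
      and yo: "y0 \<in> open_segment (W g0) (W (nx m g0))" using xs ys by (auto simp: open_segment_def)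
    obtain x1 y1 where d: "dist x1 y1 = dist x0 y0"
      and xs1: "x1 \<in> closed_segment (W f0) (W (nx m f0))"
      and ys1: "y1 \<in> closed_segment (W g0) (W (nx m g0))"
      and v: "x1 = W f0 \<or> x1 = W (nx m f0) \<or> y1 = W g0 \<or> y1 = W (nx m g0)"
      using CaseC[OF pg mn fg0 xo yo] by blast
    have mn1: "\<forall>f g u v. f < m \<longrightarrow> g < m \<longrightarrow> NA m f g \<longrightarrow> u \<in> closed_segment (W f) (W (nx m f))
        \<longrightarrow> v \<in> closed_segment (W g) (W (nx m g)) \<longrightarrow> dist x1 y1 \<le> dist u v"
      using mn d by simp
    have lt1: "dist x1 y1 < L" using lt0 d by simp
    show False by (rule CaseAB[OF pg sb mn1 lt1 fg0 xs1 ys1 v])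
  qed
qed

lemma open_in_closed: "y \<in> open_segment a b \<Longrightarrow> y \<in> closed_segment a b"
  by (simp add: open_segment_def)

lemma seg_rev: "y \<in> closed_segment a b \<Longrightarrow> y \<in> closed_segment b a"
  using closed_segment_commute by blast

lemma oseg_rev: "y \<in> open_segment a b \<Longrightarrow> y \<in> closed_segment b a"
  by (simp add: open_in_closed seg_rev)

lemma SubV:
  assumes pg: "PG m W" and sb: "\<forall>j<m. L \<le> norm (W (nx m j) - W j)"
    and ja: "ja < m" and x: "x = W ja" and g: "g < m"
    and y: "y \<in> open_segment (W g) (W (nx m g))"
    and mx: "\<forall>l>0. y + l *\<^sub>R (y - x) \<notin> convex hull (W ` {..<m})"
  shows "L \<le> dist x y"
proof -
  have m3: "3 \<le> m" using pg by (simp add: PG_def)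
  note N = nxpv[OF m3 ja]
  have ys: "y \<in> closed_segment (W g) (W (nx m g))" using y by (rule open_in_closed)
  have ext: False if xe: "x = W g \<or> x = W (nx m g)"
  proof -
    have "x \<in> closed_segment (W g) (W (nx m g))" using xe by auto
    moreover have "x \<noteq> y" using xe y by (auto simp: open_segment_def)
    ultimately obtain l where l: "l > 0" "y + l *\<^sub>R (y - x) \<in> closed_segment (W g) (W (nx m g))"
      using SegExt[OF _ y] by blast
    then show False using mx seg_sub_poly[OF pg g] by blast
  qed
  show ?thesis
  proof (cases "g = ja \<or> g = pv m ja")
    case True
    then have "x = W g \<or> x = W (nx m g)" using x N(3) by auto
    then show ?thesis using ext by blast
  next
    case False
    show ?thesis
    proof (cases "g = nx m ja")
      case True
      have "x \<in> closed_segment (W (nx m ja)) (W (pv m (nx m ja)))" using x N(4) by simp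
      moreover have "y \<in> closed_segment (W (nx m ja)) (W (nx m (nx m ja)))" using ys True by simp
      ultimately have "norm (x - W (nx m ja)) \<le> dist x y" by (rule CORNER[OF pg N(1)])
      moreover have "L \<le> norm (W (nx m ja) - W ja)" using sb ja by blast
      ultimately show ?thesis using x by (simp add: norm_minus_commute)
    next
      case False2: False
      have "ja \<noteq> nx m g"
      proof
        assume "ja = nx m g" then have "g = pv m ja" using nxpv(4)[OF m3 g] by simp
        then show False using False by simp
      qed
      then have "NA m ja g" using False False2 by (auto simp: NA_def)
      moreover have "x \<in> closed_segment (W ja) (W (nx m ja))" using x by simp
      ultimately show ?thesis using LD[OF pg sb ja g _ _ ys] by blast
    qed
  qed
qed

lemma Seg1:
  assumes pg: "PG m W" and sb: "\<forall>j<m. L \<le> norm (W (nx m j) - W j)"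
    and xy: "x \<noteq> y"
    and mx: "\<forall>l>0. y + l *\<^sub>R (y - x) \<notin> convex hull (W ` {..<m}) \<and> x + l *\<^sub>R (x - y) \<notin> convex hull (W ` {..<m})"
    and xf: "(\<exists>ja<m. x = W ja) \<or> (\<exists>f<m. x \<in> open_segment (W f) (W (nx m f)))"
    and yf: "(\<exists>jb<m. y = W jb) \<or> (\<exists>g<m. y \<in> open_segment (W g) (W (nx m g)))"
    and nadj: "\<not> (\<exists>f g. f < m \<and> g < m \<and> x \<in> open_segment (W f) (W (nx m f)) \<and>
                 y \<in> open_segment (W g) (W (nx m g)) \<and> (g = nx m f \<or> f = nx m g))"
  shows "L \<le> dist x y"
proof -
  have m3: "3 \<le> m" using pg by (simp add: PG_def)
  have mx1: "\<forall>l>0. y + l *\<^sub>R (y - x) \<notin> convex hull (W ` {..<m})" using mx by blast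
  have mx2: "\<forall>l>0. x + l *\<^sub>R (x - y) \<notin> convex hull (W ` {..<m})" using mx by blast
  from xf show ?thesis
  proof
    assume "\<exists>ja<m. x = W ja"
    then obtain ja where ja: "ja < m" "x = W ja" by blast
    from yf show ?thesis
    proof
      assume "\<exists>jb<m. y = W jb"
      then obtain jb where jb: "jb < m" "y = W jb" by blast
      show ?thesis
      proof (cases "jb = nx m ja")
        case True
        then show ?thesis using sb ja jb by (simp add: dist_norm norm_minus_commute)
      next
        case False
        show ?thesis
        proof (cases "ja = nx m jb")
          case True
          then show ?thesis using sb ja jb by (simp add: dist_norm)
        next
          case False2: False
          have "ja \<noteq> jb" using xy ja jb by auto
          then have "NA m ja jb" using False False2 by (simp add: NA_def)
          then show ?thesis using LD[OF pg sb ja(1) jb(1)] ja jb by simp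
        qed
      qed
    next
      assume "\<exists>g<m. y \<in> open_segment (W g) (W (nx m g))"
      then obtain g where g: "g < m" "y \<in> open_segment (W g) (W (nx m g))" by blast
      show ?thesis by (rule SubV[OF pg sb ja g mx1])
    qed
  next
    assume "\<exists>f<m. x \<in> open_segment (W f) (W (nx m f))"
    then obtain f where f: "f < m" "x \<in> open_segment (W f) (W (nx m f))" by blast
    from yf show ?thesis
    proof
      assume "\<exists>jb<m. y = W jb"
      then obtain jb where jb: "jb < m" "y = W jb" by blast
      have "L \<le> dist y x" by (rule SubV[OF pg sb jb f mx2])
      then show ?thesis by (simp add: dist_commute)
    next
      assume "\<exists>g<m. y \<in> open_segment (W g) (W (nx m g))"
      then obtain g where g: "g < m" "y \<in> open_segment (W g) (W (nx m g))" by blast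
      show ?thesis
      proof (cases "f = g")
        case True
        have "x \<in> closed_segment (W g) (W (nx m g))" using f True by (simp add: open_in_closed)
        then obtain l where l: "l > 0" "y + l *\<^sub>R (y - x) \<in> closed_segment (W g) (W (nx m g))"
          using SegExt[OF _ g(2) xy] by blast
        then show ?thesis using mx1 seg_sub_poly[OF pg g(1)] by blast
      next
        case False
        have "\<not> (g = nx m f \<or> f = nx m g)" using nadj f g by blast
        then have "NA m f g" using False by (simp add: NA_def)
        then show ?thesis using LD[OF pg sb f(1) g(1)] f g by (simp add: open_in_closed)
      qed
    qed
  qed
qed

lemma CORNERS:
  assumes "PG m W" "c < m"
    "u \<in> closed_segment (W c) (W (pv m c))" "w \<in> closed_segment (W c) (W (nx m c))"
  shows "u \<noteq> W c \<Longrightarrow> norm (w - W c) < dist u w" "w \<noteq> W c \<Longrightarrow> norm (u - W c) < dist u w"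
proof -
  have h: "(norm (u - W c))^2 + (norm (w - W c))^2 \<le> (dist u w)^2" by (rule ANG[OF assms])
  show "u \<noteq> W c \<Longrightarrow> norm (w - W c) < dist u w"
  proof -
    assume "u \<noteq> W c"
    then have "0 < (norm (u - W c))^2" by simp
    then have "(norm (w - W c))^2 < (dist u w)^2" using h by linarith
    then show ?thesis using power_less_imp_less_base zero_le_dist by blast
  qed
  show "w \<noteq> W c \<Longrightarrow> norm (u - W c) < dist u w"
  proof -
    assume "w \<noteq> W c"
    then have "0 < (norm (w - W c))^2" by simp
    then have "(norm (u - W c))^2 < (dist u w)^2" using h by linarith
    then show ?thesis using power_less_imp_less_base zero_le_dist by blast
  qed
qed

lemma INNSEG:
  assumes "x \<in> closed_segment A B" "inner (B - A) U \<le> 0"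
  shows "inner (x - A) U \<le> 0"
proof -
  obtain l where l: "0 \<le> l" "x = (1 - l) *\<^sub>R A + l *\<^sub>R B" using assms(1) by (auto simp: in_segment)
  have "x - A = l *\<^sub>R (B - A)" using l(2) by (simp add: algebra_simps)
  then have "inner (x - A) U = l * inner (B - A) U" by simp
  then show ?thesis using l(1) assms(2) by (simp add: mult_nonneg_nonpos)
qed

lemma SEGSUM:
  assumes "y \<in> closed_segment v w"
  shows "norm (y - v) + norm (y - w) = norm (w - v :: complex)"
proof -
  obtain l where l: "0 \<le> l" "l \<le> 1" "y = (1 - l) *\<^sub>R v + l *\<^sub>R w" using assms by (auto simp: in_segment)
  have a: "y - v = l *\<^sub>R (w - v)" using l(3) by (simp add: algebra_simps)
  have b: "y - w = (1 - l) *\<^sub>R (v - w)" using l(3) by (simp add: algebra_simps)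
  have "norm (y - v) = l * norm (w - v)" unfolding a using l(1) by simp
  moreover have "norm (y - w) = (1 - l) * norm (w - v)" unfolding b using l(2)
    by (simp add: norm_minus_commute)
  ultimately show ?thesis by (simp add: algebra_simps)
qed

lemma BAD:
  fixes x y z c u d :: complex
  assumes "0 < t" "0 < s" "y - x = t *\<^sub>R d" "z - y = s *\<^sub>R d"
    "inner (x - c) u \<le> 0" "inner (z - c) u \<le> 0" "0 < inner (y - c) u"
  shows False
proof -
  have x: "x = y - t *\<^sub>R d" using assms(3) by (simp add: algebra_simps)
  have z: "z = y + s *\<^sub>R d" using assms(4) by (simp add: algebra_simps)
  have "(s + t) *\<^sub>R (y - c) = s *\<^sub>R (x - c) + t *\<^sub>R (z - c)" unfolding x z by (simp add: algebra_simps)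
  then have "(s + t) * inner (y - c) u = s * inner (x - c) u + t * inner (z - c) u"
    by (metis inner_add_left inner_scaleR_left)
  moreover have "s * inner (x - c) u \<le> 0" "t * inner (z - c) u \<le> 0"
    using assms by (simp_all add: mult_nonneg_nonpos)
  moreover have "0 < (s + t) * inner (y - c) u" using assms by simp
  ultimately show False by linarith
qed

lemma PAIR:
  assumes pg: "PG m W" and pg': "PG m' W'"
    and g: "g < m" and yo: "y \<in> open_segment (W g) (W (nx m g))"
    and f1: "f1 < m" and g1: "g1 < m" and xo1: "x \<in> open_segment (W f1) (W (nx m f1))"
    and yo1: "y \<in> open_segment (W g1) (W (nx m g1))" and ad1: "g1 = nx m f1 \<or> f1 = nx m g1"
    and e': "e' < m'" and W1: "W' e' = W (nx m g) + T" and W2: "W' (nx m' e') = W g + T"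
    and f2: "f2 < m'" and g2: "g2 < m'" and yo2: "y + T \<in> open_segment (W' f2) (W' (nx m' f2))"
    and zo2: "z \<in> open_segment (W' g2) (W' (nx m' g2))" and ad2: "g2 = nx m' f2 \<or> f2 = nx m' g2"
    and tp: "0 < t" and sp: "0 < s" and dx: "y - x = t *\<^sub>R d" and dz: "z - (y + T) = s *\<^sub>R d"
    and L: "L \<le> norm (W (nx m g) - W g)"
  shows "L < dist x y + dist (y + T) z"
proof -
  have m3: "3 \<le> m" using pg by (simp add: PG_def)
  have m3': "3 \<le> m'" using pg' by (simp add: PG_def)
  note N = nxpv[OF m3 g]
  define v where "v = W g"
  define w where "w = W (nx m g)"
  have ys: "y \<in> closed_segment v w" using yo by (simp add: open_in_closed v_def w_def)
  have gg: "g1 = g" using OSD[OF pg g1 g yo1] yo by (simp add: open_in_closed)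
  have yT: "y + T \<in> open_segment (W' e') (W' (nx m' e'))"
  proof -
    have "T + y \<in> open_segment (T + W g) (T + W (nx m g))" using yo by simp
    then have "y + T \<in> open_segment (W (nx m g) + T) (W g + T)"
      by (simp add: add.commute open_segment_commute)
    then show ?thesis using W1 W2 by simp
  qed
  have ff: "f2 = e'" using OSD[OF pg' f2 e' yo2] yT by (simp add: open_in_closed)
  have yTs: "y + T \<in> closed_segment (v + T) (w + T)" using ys by (simp add: add.commute)
  have zT: "(z - T) - y = s *\<^sub>R d" using dz by (simp add: algebra_simps)
  have ang: "\<And>j. j < m \<Longrightarrow> inner (W (pv m j) - W j) (W (nx m j) - W j) \<le> 0" using pg by (simp add: PG_def)
  have ang': "\<And>j. j < m' \<Longrightarrow> inner (W' (pv m' j) - W' j) (W' (nx m' j) - W' j) \<le> 0" using pg' by (simp add: PG_def)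
  have vw: "v \<noteq> w" using yo by (auto simp: in_segment v_def w_def)
  obtain ta where ta: "0 < ta" "ta < 1" "y = (1 - ta) *\<^sub>R v + ta *\<^sub>R w" using yo by (auto simp: in_segment v_def w_def)
  have iyv: "0 < inner (y - v) (w - v)"
  proof -
    have "y - v = ta *\<^sub>R (w - v)" using ta(3) by (simp add: algebra_simps)
    then show ?thesis using ta vw by (simp add: power2_norm_eq_inner[symmetric])
  qed
  have iyw: "0 < inner (y - w) (v - w)"
  proof -
    have "y - w = (1 - ta) *\<^sub>R (v - w)" using ta(3) by (simp add: algebra_simps)
    then show ?thesis using ta vw by (simp add: power2_norm_eq_inner[symmetric])
  qed
  have sum: "norm (y - v) + norm (y - w) = norm (w - v)" by (rule SEGSUM[OF ys])
  have Lw: "L \<le> norm (w - v)" using L by (simp add: v_def w_def)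
  from ad1 show ?thesis
  proof
    assume "g1 = nx m f1"
    then have f1e: "f1 = pv m g" using gg nxpv(4)[OF m3 f1] by simp
    have xs: "x \<in> closed_segment (W g) (W (pv m g))"
      using xo1 f1e N(3) by (simp add: oseg_rev)
    have xv: "x \<noteq> W g" using xo1 f1e N(3) by (auto simp: open_segment_def)
    have dA: "norm (y - v) < dist x y"
      using CORNERS(1)[OF pg g xs _ xv] yo by (simp add: open_in_closed v_def)
    have ixv: "inner (x - v) (w - v) \<le> 0"
      using INNSEG[OF xs ang[OF g]] by (simp add: v_def w_def)
    from ad2 show ?thesis
    proof
      assume "g2 = nx m' f2"
      then have g2e: "g2 = nx m' e'" using ff by simp
      define c where "c = nx m' e'"
      have c: "c < m'" using nxpv(1)[OF m3' e'] by (simp add: c_def)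
      have pc: "pv m' c = e'" using nxpv(4)[OF m3' e'] by (simp add: c_def)
      have zs: "z \<in> closed_segment (W' c) (W' (nx m' c))" using zo2 g2e by (simp add: open_in_closed c_def)
      have "inner (z - W' c) (W' (pv m' c) - W' c) \<le> 0"
        using INNSEG[OF zs, of "W' (pv m' c) - W' c"] ang'[OF c] by (simp add: inner_commute)
      then have "inner ((z - T) - v) (w - v) \<le> 0"
        using pc W1 W2 by (simp add: c_def v_def w_def algebra_simps)
      then show ?thesis using BAD[OF tp sp dx zT ixv _ iyv] by blast
    next
      assume "f2 = nx m' g2"
      then have g2e: "g2 = pv m' e'" using ff nxpv(4)[OF m3' g2] by simp
      have zs: "z \<in> closed_segment (W' e') (W' (pv m' e'))"
        using zo2 g2e nxpv(3)[OF m3' e'] by (simp add: oseg_rev)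
      have zv: "z \<noteq> W' e'" using zo2 g2e nxpv(3)[OF m3' e'] by (auto simp: open_segment_def)
      have yTs': "y + T \<in> closed_segment (W' e') (W' (nx m' e'))" using yT by (simp add: open_in_closed)
      have "norm ((y + T) - W' e') < dist z (y + T)" using CORNERS(1)[OF pg' e' zs yTs' zv] .
      then have dB: "norm (y - w) < dist (y + T) z" using W1 by (simp add: w_def dist_commute)
      show ?thesis using dA dB sum Lw by linarith
    qed
  next
    assume f1e: "f1 = nx m g1"
    then have f1e': "f1 = nx m g" using gg by simp
    define c where "c = nx m g"
    have c: "c < m" using N(1) by (simp add: c_def)
    have pc: "pv m c = g" using N(4) by (simp add: c_def)
    have xs: "x \<in> closed_segment (W c) (W (nx m c))" using xo1 f1e' by (simp add: open_in_closed c_def)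
    have xw: "x \<noteq> W c" using xo1 f1e' by (auto simp: open_segment_def c_def)
    have ys': "y \<in> closed_segment (W c) (W (pv m c))" using seg_rev[OF ys] pc by (simp add: c_def v_def w_def)
    have "norm (y - W c) < dist y x" using CORNERS(2)[OF pg c ys' xs xw] .
    then have dA: "norm (y - w) < dist x y" by (simp add: c_def w_def dist_commute)
    have ixw: "inner (x - w) (v - w) \<le> 0"
      using INNSEG[OF xs, of "W (pv m c) - W c"] ang[OF c] pc by (simp add: inner_commute c_def v_def w_def)
    from ad2 show ?thesis
    proof
      assume "g2 = nx m' f2"
      then have g2e: "g2 = nx m' e'" using ff by simp
      define c' where "c' = nx m' e'"
      have c': "c' < m'" using nxpv(1)[OF m3' e'] by (simp add: c'_def)
      have pc': "pv m' c' = e'" using nxpv(4)[OF m3' e'] by (simp add: c'_def)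
      have zs: "z \<in> closed_segment (W' c') (W' (nx m' c'))" using zo2 g2e by (simp add: open_in_closed c'_def)
      have zv: "z \<noteq> W' c'" using zo2 g2e by (auto simp: open_segment_def c'_def)
      have yTs': "y + T \<in> closed_segment (W' c') (W' (pv m' c'))"
        using oseg_rev[OF yT] pc' by (simp add: c'_def)
      have "norm ((y + T) - W' c') < dist (y + T) z" using CORNERS(2)[OF pg' c' yTs' zs zv] .
      then have dB: "norm (y - v) < dist (y + T) z" using W2 by (simp add: c'_def v_def)
      show ?thesis using dA dB sum Lw by linarith
    next
      assume "f2 = nx m' g2"
      then have g2e: "g2 = pv m' e'" using ff nxpv(4)[OF m3' g2] by simp
      have zs: "z \<in> closed_segment (W' e') (W' (pv m' e'))"
        using zo2 g2e nxpv(3)[OF m3' e'] by (simp add: oseg_rev)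
      have "inner (z - W' e') (W' (nx m' e') - W' e') \<le> 0"
        using INNSEG[OF zs, of "W' (nx m' e') - W' e'"] ang'[OF e'] by simp
      then have "inner ((z - T) - w) (v - w) \<le> 0"
        using W1 W2 by (simp add: v_def w_def algebra_simps)
      then show ?thesis using BAD[OF tp sp dx zT ixw _ iyw] by blast
    qed
  qed
qed

lemma RUN:
  fixes l :: "nat \<Rightarrow> real"
  assumes nn: "\<forall>i<k. 0 \<le> l i"
    and pr: "\<forall>i. Suc i < k \<and> adj i \<and> adj (Suc i) \<longrightarrow> L \<le> l i + l (Suc i)"
  shows "s + r \<le> k \<Longrightarrow> (\<forall>j. s \<le> j \<and> j < s + r \<longrightarrow> adj j) \<Longrightarrow>
         real (r div 2) * L \<le> (\<Sum>j\<in>{s..<s + r}. l j)"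
proof (induction r arbitrary: s rule: less_induct)
  case (less r)
  show ?case
  proof (cases "r < 2")
    case True
    then have "r div 2 = 0" by simp
    moreover have "0 \<le> (\<Sum>j\<in>{s..<s + r}. l j)" using nn less.prems(1) by (intro sum_nonneg) auto
    ultimately show ?thesis by simp
  next
    case False
    then obtain r' where r': "r = Suc (Suc r')" by (metis add_2_eq_Suc le_add_diff_inverse not_less)
    have ih: "real (r' div 2) * L \<le> (\<Sum>j\<in>{Suc (Suc s)..<Suc (Suc s) + r'}. l j)"
      using less.IH[of r' "Suc (Suc s)"] less.prems r' by auto
    have "{s..<s + r} = insert s (insert (Suc s) {Suc (Suc s)..<Suc (Suc s) + r'})" using r' by auto
    then have "(\<Sum>j\<in>{s..<s + r}. l j) = l s + l (Suc s) + (\<Sum>j\<in>{Suc (Suc s)..<Suc (Suc s) + r'}. l j)"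
      by simp
    moreover have "L \<le> l s + l (Suc s)" using pr less.prems r' by auto
    moreover have "real (r div 2) * L = L + real (r' div 2) * L" using r' by (simp add: algebra_simps)
    ultimately show ?thesis using ih by linarith
  qed
qed

lemma COMB:
  fixes l :: "nat \<Rightarrow> real"
  assumes nn: "\<forall>i<k. 0 \<le> l i"
    and na: "\<forall>i<k. \<not> adj i \<longrightarrow> L \<le> l i"
    and pr: "\<forall>i. Suc i < k \<and> adj i \<and> adj (Suc i) \<longrightarrow> L \<le> l i + l (Suc i)"
  shows "real (p_count k adj + q_count k adj) * L \<le> (\<Sum>i<k. l i)"
proof -
  define R where "R = max_runs k adj"
  define I where "I = (\<lambda>pp::nat \<times> nat. {fst pp..<snd pp})"
  define A where "A = {i. i < k \<and> adj i}"
  define B where "B = {i. i < k \<and> \<not> adj i}"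
  have finR: "finite R"
    by (rule finite_subset[of _ "{..k} \<times> {..k}"]) (auto simp: R_def max_runs_def)
  have Rmem: "\<And>s t. (s, t) \<in> R \<longleftrightarrow> s < t \<and> t \<le> k \<and> (\<forall>j. s \<le> j \<and> j < t \<longrightarrow> adj j) \<and>
      (s = 0 \<or> \<not> adj (s - 1)) \<and> (t = k \<or> \<not> adj t)" by (simp add: R_def max_runs_def)
  have cover: "A = \<Union>(I ` R)"
  proof
    show "\<Union>(I ` R) \<subseteq> A"
    proof
      fix i assume "i \<in> \<Union>(I ` R)"
      then obtain s t where st: "(s, t) \<in> R" "s \<le> i" "i < t" by (auto simp: I_def)
      then show "i \<in> A" using Rmem[of s t] by (auto simp: A_def)
    qed
  next
    show "A \<subseteq> \<Union>(I ` R)"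
    proof
      fix i assume "i \<in> A"
      then have ik: "i < k" and ai: "adj i" by (auto simp: A_def)
      define P where "P = (\<lambda>s. s \<le> i \<and> (\<forall>j. s \<le> j \<and> j \<le> i \<longrightarrow> adj j))"
      define Q where "Q = (\<lambda>t. i < t \<and> (t = k \<or> \<not> adj t))"
      define s where "s = (LEAST s. P s)"
      define t where "t = (LEAST t. Q t)"
      have Pi: "P i" using ai by (auto simp: P_def)
      have Ps: "P s" unfolding s_def using Pi by (rule LeastI)
      have Qk: "Q k" using ik by (simp add: Q_def)
      have Qt: "Q t" unfolding t_def using Qk by (rule LeastI)
      have tk: "t \<le> k" unfolding t_def using Qk by (rule Least_le)
      have smin: "\<And>s'. P s' \<Longrightarrow> s \<le> s'" unfolding s_def by (rule Least_le)
      have tmin: "\<And>t'. Q t' \<Longrightarrow> t \<le> t'" unfolding t_def by (rule Least_le)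
      have si: "s \<le> i" using Ps by (simp add: P_def)
      have sadj: "\<And>j. s \<le> j \<Longrightarrow> j \<le> i \<Longrightarrow> adj j" using Ps by (simp add: P_def)
      have it: "i < t" and tq: "t = k \<or> \<not> adj t" using Qt by (simp_all add: Q_def)
      have all: "\<forall>j. s \<le> j \<and> j < t \<longrightarrow> adj j"
      proof (intro allI impI)
        fix j assume j: "s \<le> j \<and> j < t"
        show "adj j"
        proof (cases "j \<le> i")
          case True then show ?thesis using sadj j by blast
        next
          case False
          have "\<not> Q j" using tmin[of j] j by linarith
          then show ?thesis using False j tk by (simp add: Q_def)
        qed
      qed
      have sl: "s = 0 \<or> \<not> adj (s - 1)"
      proof (rule ccontr)
        assume "\<not> (s = 0 \<or> \<not> adj (s - 1))"
        then have h: "s \<noteq> 0" "adj (s - 1)" by auto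
        have "P (s - 1)" unfolding P_def
        proof (intro conjI allI impI)
          show "s - 1 \<le> i" using si by simp
          fix j assume j: "s - 1 \<le> j \<and> j \<le> i"
          show "adj j"
          proof (cases "j = s - 1")
            case True then show ?thesis using h by simp
          next
            case False then have "s \<le> j" using j h(1) by linarith
            then show ?thesis using sadj j by blast
          qed
        qed
        then show False using smin[of "s - 1"] h(1) by simp
      qed
      have "(s, t) \<in> R" using Rmem[of s t] si it tk all sl tq by simp
      moreover have "i \<in> I (s, t)" using si it by (simp add: I_def)
      ultimately show "i \<in> \<Union>(I ` R)" by blast
    qed
  qed
  have disj: "\<forall>x\<in>R. \<forall>y\<in>R. x \<noteq> y \<longrightarrow> I x \<inter> I y = {}"
  proof (intro ballI impI)
    fix x y assume x: "x \<in> R" and y: "y \<in> R" and xy: "x \<noteq> y"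
    obtain s t where xe: "x = (s, t)" by (cases x)
    obtain s' t' where ye: "y = (s', t')" by (cases y)
    have X: "s < t" "t \<le> k" "\<forall>j. s \<le> j \<and> j < t \<longrightarrow> adj j" "s = 0 \<or> \<not> adj (s - 1)" "t = k \<or> \<not> adj t"
      using x xe Rmem by auto
    have Y: "s' < t'" "t' \<le> k" "\<forall>j. s' \<le> j \<and> j < t' \<longrightarrow> adj j" "s' = 0 \<or> \<not> adj (s' - 1)" "t' = k \<or> \<not> adj t'"
      using y ye Rmem by auto
    show "I x \<inter> I y = {}"
    proof (rule ccontr)
      assume "I x \<inter> I y \<noteq> {}"
      then obtain j where "j \<in> I x \<inter> I y" by blast
      then have j: "s \<le> j" "j < t" "s' \<le> j" "j < t'" by (auto simp: I_def xe ye)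
      have "\<not> s < s'"
      proof
        assume "s < s'"
        then have "s \<le> s' - 1 \<and> s' - 1 < t" using j by linarith
        then have "adj (s' - 1)" using X(3) by blast
        then show False using Y(4) \<open>s < s'\<close> by auto
      qed
      moreover have "\<not> s' < s"
      proof
        assume "s' < s"
        then have "s' \<le> s - 1 \<and> s - 1 < t'" using j by linarith
        then have "adj (s - 1)" using Y(3) by blast
        then show False using X(4) \<open>s' < s\<close> by auto
      qed
      moreover have "\<not> t < t'"
      proof
        assume "t < t'"
        then have "s' \<le> t \<and> t < t'" using j by linarith
        then have "adj t" using Y(3) by blast
        then show False using X(5) \<open>t < t'\<close> Y(2) by auto
      qed
      moreover have "\<not> t' < t"
      proof
        assume "t' < t"
        then have "s \<le> t' \<and> t' < t" using j by linarith
        then have "adj t'" using X(3) by blast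
        then show False using Y(5) \<open>t' < t\<close> X(2) by auto
      qed
      ultimately show False using xy xe ye by auto
    qed
  qed
  have sumA: "(\<Sum>i\<in>A. l i) = (\<Sum>pp\<in>R. \<Sum>j\<in>I pp. l j)"
    unfolding cover by (rule sum.UNION_disjoint[OF finR _ disj]) (simp add: I_def)
  have runs: "\<forall>pp\<in>R. real ((snd pp - fst pp) div 2) * L \<le> (\<Sum>j\<in>I pp. l j)"
  proof
    fix pp assume pp: "pp \<in> R"
    obtain s t where pe: "pp = (s, t)" by (cases pp)
    have X: "s < t" "t \<le> k" "\<forall>j. s \<le> j \<and> j < t \<longrightarrow> adj j" using pp pe Rmem by auto
    have "real ((t - s) div 2) * L \<le> (\<Sum>j\<in>{s..<s + (t - s)}. l j)"
      using RUN[OF nn pr, of s "t - s"] X by auto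
    then show "real ((snd pp - fst pp) div 2) * L \<le> (\<Sum>j\<in>I pp. l j)" using X(1) by (simp add: pe I_def)
  qed
  have qeq: "real (q_count k adj) * L = (\<Sum>pp\<in>R. real ((snd pp - fst pp) div 2) * L)"
    by (simp add: q_count_def R_def case_prod_beta sum_distrib_right)
  have qA: "real (q_count k adj) * L \<le> (\<Sum>i\<in>A. l i)"
    unfolding qeq sumA by (rule sum_mono) (use runs in blast)
  have finB: "finite B" by (simp add: B_def)
  have pB: "real (p_count k adj) * L \<le> (\<Sum>i\<in>B. l i)"
  proof -
    have "real (p_count k adj) * L = (\<Sum>i\<in>B. L)" by (simp add: p_count_def B_def)
    also have "\<dots> \<le> (\<Sum>i\<in>B. l i)" using na by (intro sum_mono) (auto simp: B_def)
    finally show ?thesis .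
  qed
  have "{..<k} = A \<union> B" by (auto simp: A_def B_def)
  moreover have "A \<inter> B = {}" by (auto simp: A_def B_def)
  moreover have "finite A" by (simp add: A_def)
  ultimately have "(\<Sum>i<k. l i) = (\<Sum>i\<in>A. l i) + (\<Sum>i\<in>B. l i)" using finB by (simp add: sum.union_disjoint)
  then show ?thesis using qA pB by (simp add: algebra_simps)
qed

lemma nxt_nx: "nxt n i j = nx (n i) j" by (simp add: nxt_def nx_def)
lemma prv_pv: "prv n i j = pv (n i) j" by (simp add: prv_def pv_def)

lemma PG_of:
  assumes surf: "translation_surface N n V glue" and p1: "P1 N n V" and i: "i < N"
  shows "PG (n i) (V i)"
proof -
  have a: "3 \<le> n i" "inj_on (V i) {..<n i}" using surf i by (auto simp: translation_surface_def)
  have b: "\<forall>j<n i. \<forall>l<n i. l \<noteq> j \<and> l \<noteq> nx (n i) j \<longrightarrow> 0 < cross (V i (nx (n i) j) - V i j) (V i l - V i j)"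
    using p1 i unfolding P1_def nxt_nx by blast
  have c: "\<forall>j<n i. inner (V i (pv (n i) j) - V i j) (V i (nx (n i) j) - V i j) \<le> 0"
    using p1 i unfolding P1_def nxt_nx prv_pv by blast
  show ?thesis using a b c by (simp add: PG_def)
qed

lemma l0_le:
  assumes i: "i < N" and j: "j < n i"
  shows "l0 N n V \<le> norm (V i (nx (n i) j) - V i j)"
proof -
  have fin: "finite (sides N n)"
    by (rule finite_subset[of _ "Sigma {..<N} (\<lambda>i. {..<n i})"]) (auto simp: sides_def)
  have mem: "(i, j) \<in> sides N n" using i j by (simp add: sides_def)
  have "l0 N n V \<le> norm (side_vec n V (i, j))" unfolding l0_def
    using fin mem by (intro Min_le) auto
  then show ?thesis by (simp add: side_vec_def side_start_def side_end_def nxt_nx)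
qed

lemma TRANS:
  assumes surf: "translation_surface N n V glue" and p: "p < N" and ee: "ee < n p"
    and bo: "y \<in> open_segment (side_start V (p, ee)) (side_end n V (p, ee))"
    and gl: "glue (p, ee) = (Q, e')"
  shows "Q < N \<and> e' < n Q \<and> V Q e' = V p (nx (n p) ee) + transl n V glue (p, ee) \<and>
         V Q (nx (n Q) e') = V p ee + transl n V glue (p, ee) \<and>
         y + transl n V glue (p, ee) \<in> open_segment (V Q e') (V Q (nx (n Q) e'))"
proof -
  have mem: "(p, ee) \<in> sides N n" using p ee by (simp add: sides_def)
  have gs: "glue (p, ee) \<in> sides N n" and sv: "side_vec n V (glue (p, ee)) = - side_vec n V (p, ee)"
    using surf mem unfolding translation_surface_def by blast+
  have Qe: "Q < N" "e' < n Q" using gs gl by (simp_all add: sides_def)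
  define T where "T = transl n V glue (p, ee)"
  have e1: "V Q e' = V p (nx (n p) ee) + T"
    using gl by (simp add: T_def transl_def side_start_def side_end_def nxt_nx)
  have "V Q (nx (n Q) e') - V Q e' = - (V p (nx (n p) ee) - V p ee)"
    using sv gl by (simp add: side_vec_def side_start_def side_end_def nxt_nx)
  then have e2: "V Q (nx (n Q) e') = V p ee + T" using e1 by (simp add: algebra_simps)
  have "T + y \<in> open_segment (T + V p ee) (T + V p (nx (n p) ee))"
    using bo by (simp add: side_start_def side_end_def nxt_nx)
  then have "y + T \<in> open_segment (V Q (nx (n Q) e')) (V Q e')"
    using e1 e2 by (simp add: add.commute)
  then have "y + T \<in> open_segment (V Q e') (V Q (nx (n Q) e'))" by (simp add: open_segment_commute)
  then show ?thesis using Qe e1 e2 by (simp add: T_def)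
qed

theorem mainTheorem4:
  fixes N :: nat and n :: "nat \<Rightarrow> nat" and V :: "nat \<Rightarrow> nat \<Rightarrow> complex"
    and glue :: "nat \<times> nat \<Rightarrow> nat \<times> nat"
    and k :: nat and P :: "nat \<Rightarrow> nat" and a b :: "nat \<Rightarrow> complex"
    and e :: "nat \<Rightarrow> nat" and d :: complex
  assumes surf: "translation_surface N n V glue"
    and p1: "P1 N n V"
    and p2: "P2 N n glue"
    and sc: "saddle_decomp N n V glue k P a b e d"
  shows "(\<forall>i<k. \<not> adjacent_seg n V P a b i \<longrightarrow> l0 N n V \<le> dist (a i) (b i))
       \<and> (\<forall>i. Suc i < k \<and> adjacent_seg n V P a b i \<and> adjacent_seg n V P a b (Suc i) \<longrightarrow>
            dist (a i) (b i) + dist (a (Suc i)) (b (Suc i)) > l0 N n V)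
       \<and> (\<Sum>i<k. dist (a i) (b i)) \<ge>
            real (p_count k (adjacent_seg n V P a b) + q_count k (adjacent_seg n V P a b)) * l0 N n V"
proof -
  let ?L = "l0 N n V"
  let ?adj = "adjacent_seg n V P a b"
  have segi: "\<forall>i<k. P i < N \<and> a i \<in> poly n V (P i) \<and> b i \<in> poly n V (P i) \<and>
        (\<exists>t>0. b i - a i = t *\<^sub>R d) \<and>
        (\<forall>s>0. a i - s *\<^sub>R d \<notin> poly n V (P i) \<and> b i + s *\<^sub>R d \<notin> poly n V (P i))"
    and d0: "d \<noteq> 0"
    and a0: "a 0 \<in> vertices n V (P 0)" and bk: "b (k - 1) \<in> vertices n V (P (k - 1))"
    and tr: "\<forall>i. Suc i < k \<longrightarrow> e i < n (P i) \<and>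
        b i \<in> open_segment (side_start V (P i, e i)) (side_end n V (P i, e i)) \<and>
        fst (glue (P i, e i)) = P (Suc i) \<and> a (Suc i) = b i + transl n V glue (P i, e i)"
    using sc unfolding saddle_decomp_def by blast+
  have adj_iff: "\<And>i. ?adj i \<longleftrightarrow> (\<exists>f g. f < n (P i) \<and> g < n (P i) \<and>
        a i \<in> open_segment (V (P i) f) (V (P i) (nx (n (P i)) f)) \<and>
        b i \<in> open_segment (V (P i) g) (V (P i) (nx (n (P i)) g)) \<and>
        (g = nx (n (P i)) f \<or> f = nx (n (P i)) g))"
    by (simp add: adjacent_seg_def side_start_def side_end_def nxt_nx)
  have aform: "\<And>i. i < k \<Longrightarrow> (\<exists>ja<n (P i). a i = V (P i) ja) \<or>
      (\<exists>f<n (P i). a i \<in> open_segment (V (P i) f) (V (P i) (nx (n (P i)) f)))"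
  proof -
    fix i assume ik: "i < k"
    show "(\<exists>ja<n (P i). a i = V (P i) ja) \<or>
      (\<exists>f<n (P i). a i \<in> open_segment (V (P i) f) (V (P i) (nx (n (P i)) f)))"
    proof (cases i)
      case 0 then show ?thesis using a0 by (auto simp: vertices_def)
    next
      case (Suc i')
      have h: "e i' < n (P i')" "b i' \<in> open_segment (side_start V (P i', e i')) (side_end n V (P i', e i'))"
        "fst (glue (P i', e i')) = P i" "a i = b i' + transl n V glue (P i', e i')"
        using tr ik Suc by auto
      have pi': "P i' < N" using segi ik Suc by auto
      obtain Q e' where gl: "glue (P i', e i') = (Q, e')" by (cases "glue (P i', e i')")
      have Q: "Q = P i" using h(3) gl by simp
      have tt: "e' < n Q" "a i \<in> open_segment (V Q e') (V Q (nx (n Q) e'))"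
        using TRANS[OF surf pi' h(1) h(2) gl] h(4) by auto
      show ?thesis using tt unfolding Q by blast
    qed
  qed
  have bform: "\<And>i. i < k \<Longrightarrow> (\<exists>jb<n (P i). b i = V (P i) jb) \<or>
      (\<exists>g<n (P i). b i \<in> open_segment (V (P i) g) (V (P i) (nx (n (P i)) g)))"
  proof -
    fix i assume ik: "i < k"
    show "(\<exists>jb<n (P i). b i = V (P i) jb) \<or>
      (\<exists>g<n (P i). b i \<in> open_segment (V (P i) g) (V (P i) (nx (n (P i)) g)))"
    proof (cases "Suc i < k")
      case True
      then show ?thesis using tr by (auto simp: side_start_def side_end_def nxt_nx)
    next
      case False
      then have "i = k - 1" using ik by simp
      then show ?thesis using bk by (auto simp: vertices_def)
    qed
  qed
  have part1: "\<forall>i<k. \<not> ?adj i \<longrightarrow> ?L \<le> dist (a i) (b i)"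
  proof (intro allI impI)
    fix i assume ik: "i < k" and na: "\<not> ?adj i"
    have Pi: "P i < N" using segi ik by blast
    have pg: "PG (n (P i)) (V (P i))" by (rule PG_of[OF surf p1 Pi])
    have sb: "\<forall>j<n (P i). ?L \<le> norm (V (P i) (nx (n (P i)) j) - V (P i) j)"
      using Pi by (blast intro: l0_le)
    obtain t where t: "t > 0" "b i - a i = t *\<^sub>R d" using segi ik by blast
    have mx0: "\<forall>s>0. a i - s *\<^sub>R d \<notin> poly n V (P i) \<and> b i + s *\<^sub>R d \<notin> poly n V (P i)"
      using segi ik by blast
    have xy: "a i \<noteq> b i" using t d0 by auto
    have mx: "\<forall>l>0. b i + l *\<^sub>R (b i - a i) \<notin> convex hull (V (P i) ` {..<n (P i)}) \<and>
        a i + l *\<^sub>R (a i - b i) \<notin> convex hull (V (P i) ` {..<n (P i)})"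
    proof (intro allI impI)
      fix l :: real assume l: "l > 0"
      have "l * t > 0" using l t by simp
      moreover have "b i + l *\<^sub>R (b i - a i) = b i + (l * t) *\<^sub>R d" using t by simp
      moreover have "a i + l *\<^sub>R (a i - b i) = a i - (l * t) *\<^sub>R d"
      proof -
        have "a i - b i = - (t *\<^sub>R d)" using t(2) by (simp add: algebra_simps)
        then show ?thesis by simp
      qed
      ultimately show "b i + l *\<^sub>R (b i - a i) \<notin> convex hull (V (P i) ` {..<n (P i)}) \<and>
        a i + l *\<^sub>R (a i - b i) \<notin> convex hull (V (P i) ` {..<n (P i)})"
        using mx0 by (simp add: poly_def)
    qed
    have nadj: "\<not> (\<exists>f g. f < n (P i) \<and> g < n (P i) \<and>
        a i \<in> open_segment (V (P i) f) (V (P i) (nx (n (P i)) f)) \<and>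
        b i \<in> open_segment (V (P i) g) (V (P i) (nx (n (P i)) g)) \<and>
        (g = nx (n (P i)) f \<or> f = nx (n (P i)) g))" using na adj_iff by blast
    show "?L \<le> dist (a i) (b i)" by (rule Seg1[OF pg sb xy mx aform[OF ik] bform[OF ik] nadj])
  qed
  have part2: "\<forall>i. Suc i < k \<and> ?adj i \<and> ?adj (Suc i) \<longrightarrow>
      dist (a i) (b i) + dist (a (Suc i)) (b (Suc i)) > ?L"
  proof (intro allI impI)
    fix i assume h: "Suc i < k \<and> ?adj i \<and> ?adj (Suc i)"
    then have ik: "i < k" and sk: "Suc i < k" by auto
    have Pi: "P i < N" using segi ik by blast
    have PS: "P (Suc i) < N" using segi sk by blast
    have pg: "PG (n (P i)) (V (P i))" by (rule PG_of[OF surf p1 Pi])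
    have pg': "PG (n (P (Suc i))) (V (P (Suc i)))" by (rule PG_of[OF surf p1 PS])
    have t1: "e i < n (P i)" "b i \<in> open_segment (side_start V (P i, e i)) (side_end n V (P i, e i))"
        "fst (glue (P i, e i)) = P (Suc i)" "a (Suc i) = b i + transl n V glue (P i, e i)"
      using tr sk by auto
    obtain Q e' where gl: "glue (P i, e i) = (Q, e')" by (cases "glue (P i, e i)")
    have Q: "Q = P (Suc i)" using t1(3) gl by simp
    define T where "T = transl n V glue (P i, e i)"
    have TR: "e' < n Q" "V Q e' = V (P i) (nx (n (P i)) (e i)) + T"
      "V Q (nx (n Q) e') = V (P i) (e i) + T"
      using TRANS[OF surf Pi t1(1) t1(2) gl] by (simp_all add: T_def)
    have yo: "b i \<in> open_segment (V (P i) (e i)) (V (P i) (nx (n (P i)) (e i)))"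
      using t1(2) by (simp add: side_start_def side_end_def nxt_nx)
    obtain f1 g1 where A1: "f1 < n (P i)" "g1 < n (P i)"
      "a i \<in> open_segment (V (P i) f1) (V (P i) (nx (n (P i)) f1))"
      "b i \<in> open_segment (V (P i) g1) (V (P i) (nx (n (P i)) g1))"
      "g1 = nx (n (P i)) f1 \<or> f1 = nx (n (P i)) g1" using h adj_iff by blast
    obtain f2 g2 where A2: "f2 < n Q" "g2 < n Q"
      "a (Suc i) \<in> open_segment (V Q f2) (V Q (nx (n Q) f2))"
      "b (Suc i) \<in> open_segment (V Q g2) (V Q (nx (n Q) g2))"
      "g2 = nx (n Q) f2 \<or> f2 = nx (n Q) g2" using h adj_iff[of "Suc i"] Q by blast
    have aS: "a (Suc i) = b i + T" using t1(4) by (simp add: T_def)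
    obtain t where t: "t > 0" "b i - a i = t *\<^sub>R d" using segi ik by blast
    obtain s where s: "s > 0" "b (Suc i) - a (Suc i) = s *\<^sub>R d" using segi sk by blast
    have pgQ: "PG (n Q) (V Q)" using pg' Q by simp
    have Lb: "?L \<le> norm (V (P i) (nx (n (P i)) (e i)) - V (P i) (e i))" using Pi t1(1) by (rule l0_le)
    have "?L < dist (a i) (b i) + dist (b i + T) (b (Suc i))"
      by (rule PAIR[OF pg pgQ t1(1) yo A1(1,2,3,4,5) TR(1,2,3) A2(1,2) A2(3)[unfolded aS] A2(4,5)
            t(1) s(1) t(2) s(2)[unfolded aS] Lb])
    then show "dist (a i) (b i) + dist (a (Suc i)) (b (Suc i)) > ?L" using aS by simp
  qed
  have part3: "real (p_count k ?adj + q_count k ?adj) * ?L \<le> (\<Sum>i<k. dist (a i) (b i))"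
  proof (rule COMB)
    show "\<forall>i<k. 0 \<le> dist (a i) (b i)" by simp
    show "\<forall>i<k. \<not> ?adj i \<longrightarrow> ?L \<le> dist (a i) (b i)" by (rule part1)
    show "\<forall>i. Suc i < k \<and> ?adj i \<and> ?adj (Suc i) \<longrightarrow> ?L \<le> dist (a i) (b i) + dist (a (Suc i)) (b (Suc i))"
      using part2 by (simp add: less_imp_le)
  qed
  show ?thesis using part1 part2 part3 by simp
qed

end
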